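(* Let $L$ be a simple Lie algebra over a field $k$ with $|k|\geq4$, generated by its pure extremal elements, whose extremal geometry contains lines. Let $x,y\in E$ with $g(x,y)=1$ and associated $5$-grading $L=\bigoplus_{i=-2}^2L_i$. Let $c,d\in E\cap L_{-1}$ with $[c,d]=x$, put $q=-[y,d]$ (so that $g(c,q)=1$), let $L=\bigoplus_{i=-2}^2L'_i$ be the $5$-grading associated with $(c,q)$, and put $J=L_{-1}\cap L'_{-1}$, $J'=L_{-1}\cap L'_0$. Then $L_{-1}=kc\oplus J\oplus J'\oplus kd$. Moreover $L_{-1}\cap L'_1=kd$.
   Context: A nonzero $a\in L$ is extremal if there is $g_a\colon L\to k$ with $[a,[a,u]]=2g_a(u)a$, $[[a,u],[a,w]]=g_a([u,w])a+g_a(w)[a,u]-g_a(u)[a,w]$, $[a,[u,[a,w]]]=g_a([u,w])a-g_a(w)[a,u]-g_a(u)[a,w]$ for all $u,w$; sandwiches satisfy $[a,[a,u]]=0=[a,[u,[a,w]]]$; pure = non-sandwich; $E$ = set of extremal elements; $g$ = unique symmetric bilinear form with $g(a,u)=g_a(u)$ for $a\in E$. Pure extremal $a,b$, $ka\ne kb$, are collinear if $[a,b]=0$ and $\lambda a+\mu b\in E\cup\{0\}$ for all $\lambda,\mu$; the extremal geometry contains lines iff such a pair exists. For $a,b\in E$ with $g(a,b)=1$ the associated $5$-grading is $M_{-2}=ka$, $M_{-1}=[a,U]$, $M_0=\{l:[a,l]\in ka,[b,l]\in kb\}$, $M_1=[b,U]$, $M_2=kb$ with $U=\{u:g(u,a)=g(u,b)=g(u,[a,b])=0\}$.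 Elements $c,d$ as in the claim exist under these hypotheses. *)

theory Defs
  imports Main
begin

definition vec_space :: "('k::field \<Rightarrow> 'v::ab_group_add \<Rightarrow> 'v) \<Rightarrow> bool" where
  "vec_space sm \<longleftrightarrow>
     (\<forall>a x y. sm a (x + y) = sm a x + sm a y) \<and>
     (\<forall>a b x. sm (a + b) x = sm a x + sm b x) \<and>
     (\<forall>a b x. sm a (sm b x) = sm (a * b) x) \<and>
     (\<forall>x. sm 1 x = x)"

definition lie_algebra :: "('k::field \<Rightarrow> 'v::ab_group_add \<Rightarrow> 'v) \<Rightarrow> ('v \<Rightarrow> 'v \<Rightarrow> 'v) \<Rightarrow> bool" where
  "lie_algebra sm br \<longleftrightarrow> vec_space sm \<and>
     (\<forall>x y z. br (x + y) z = br x z + br y z) \<and>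
     (\<forall>x y z. br x (y + z) = br x y + br x z) \<and>
     (\<forall>a x y. br (sm a x) y = sm a (br x y)) \<and>
     (\<forall>a x y. br x (sm a y) = sm a (br x y)) \<and>
     (\<forall>x. br x x = 0) \<and>
     (\<forall>x y z. br x (br y z) + br y (br z x) + br z (br x y) = 0)"

definition lin_subspace :: "('k::field \<Rightarrow> 'v::ab_group_add \<Rightarrow> 'v) \<Rightarrow> 'v set \<Rightarrow> bool" where
  "lin_subspace sm S \<longleftrightarrow> 0 \<in> S \<and> (\<forall>x\<in>S. \<forall>y\<in>S. x + y \<in> S) \<and> (\<forall>a. \<forall>x\<in>S. sm a x \<in> S)"

definition lie_ideal :: "('k::field \<Rightarrow> 'v::ab_group_add \<Rightarrow> 'v) \<Rightarrow> ('v \<Rightarrow> 'v \<Rightarrow> 'v) \<Rightarrow> 'v set \<Rightarrow> bool" where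
  "lie_ideal sm br I \<longleftrightarrow> lin_subspace sm I \<and> (\<forall>x. \<forall>i\<in>I. br x i \<in> I)"

definition simple_lie_algebra :: "('k::field \<Rightarrow> 'v::ab_group_add \<Rightarrow> 'v) \<Rightarrow> ('v \<Rightarrow> 'v \<Rightarrow> 'v) \<Rightarrow> bool" where
  "simple_lie_algebra sm br \<longleftrightarrow> lie_algebra sm br \<and> (\<exists>u w. br u w \<noteq> 0) \<and>
     (\<forall>I. lie_ideal sm br I \<longrightarrow> I = {0} \<or> I = UNIV)"

inductive_set lie_gen :: "('k::field \<Rightarrow> 'v::ab_group_add \<Rightarrow> 'v) \<Rightarrow> ('v \<Rightarrow> 'v \<Rightarrow> 'v) \<Rightarrow> 'v set \<Rightarrow> 'v set"
  for sm br S where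
  gen: "x \<in> S \<Longrightarrow> x \<in> lie_gen sm br S"
| zero: "0 \<in> lie_gen sm br S"
| add: "x \<in> lie_gen sm br S \<Longrightarrow> y \<in> lie_gen sm br S \<Longrightarrow> x + y \<in> lie_gen sm br S"
| scale: "x \<in> lie_gen sm br S \<Longrightarrow> sm a x \<in> lie_gen sm br S"
| bracket: "x \<in> lie_gen sm br S \<Longrightarrow> y \<in> lie_gen sm br S \<Longrightarrow> br x y \<in> lie_gen sm br S"

definition line_span :: "('k::field \<Rightarrow> 'v::ab_group_add \<Rightarrow> 'v) \<Rightarrow> 'v \<Rightarrow> 'v set" where
  "line_span sm a = range (\<lambda>t. sm t a)"

definition extremal_with :: "('k::field \<Rightarrow> 'v::ab_group_add \<Rightarrow> 'v) \<Rightarrow> ('v \<Rightarrow> 'v \<Rightarrow> 'v) \<Rightarrow> 'v \<Rightarrow> ('v \<Rightarrow> 'k) \<Rightarrow> bool" where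
  "extremal_with sm br a ga \<longleftrightarrow>
     (\<forall>u. br a (br a u) = sm (2 * ga u) a) \<and>
     (\<forall>u w. br (br a u) (br a w) = sm (ga (br u w)) a + sm (ga w) (br a u) - sm (ga u) (br a w)) \<and>
     (\<forall>u w. br a (br u (br a w)) = sm (ga (br u w)) a - sm (ga w) (br a u) - sm (ga u) (br a w))"

definition extremal :: "('k::field \<Rightarrow> 'v::ab_group_add \<Rightarrow> 'v) \<Rightarrow> ('v \<Rightarrow> 'v \<Rightarrow> 'v) \<Rightarrow> 'v \<Rightarrow> bool" where
  "extremal sm br a \<longleftrightarrow> a \<noteq> 0 \<and> (\<exists>ga. extremal_with sm br a ga)"

definition sandwich :: "('k::field \<Rightarrow> 'v::ab_group_add \<Rightarrow> 'v) \<Rightarrow> ('v \<Rightarrow> 'v \<Rightarrow> 'v) \<Rightarrow> 'v \<Rightarrow> bool" where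
  "sandwich sm br a \<longleftrightarrow> extremal sm br a \<and> (\<forall>u. br a (br a u) = 0) \<and> (\<forall>u w. br a (br u (br a w)) = 0)"

definition pure_extremal :: "('k::field \<Rightarrow> 'v::ab_group_add \<Rightarrow> 'v) \<Rightarrow> ('v \<Rightarrow> 'v \<Rightarrow> 'v) \<Rightarrow> 'v \<Rightarrow> bool" where
  "pure_extremal sm br a \<longleftrightarrow> extremal sm br a \<and> \<not> sandwich sm br a"

definition extremal_set :: "('k::field \<Rightarrow> 'v::ab_group_add \<Rightarrow> 'v) \<Rightarrow> ('v \<Rightarrow> 'v \<Rightarrow> 'v) \<Rightarrow> 'v set" where
  "extremal_set sm br = {a. extremal sm br a}"

definition extremal_form :: "('k::field \<Rightarrow> 'v::ab_group_add \<Rightarrow> 'v) \<Rightarrow> ('v \<Rightarrow> 'v \<Rightarrow> 'v) \<Rightarrow> ('v \<Rightarrow> 'v \<Rightarrow> 'k) \<Rightarrow> bool" where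
  "extremal_form sm br g \<longleftrightarrow>
     (\<forall>x y z. g (x + y) z = g x z + g y z) \<and>
     (\<forall>a x y. g (sm a x) y = a * g x y) \<and>
     (\<forall>x y. g x y = g y x) \<and>
     (\<forall>a \<in> extremal_set sm br. extremal_with sm br a (g a))"

definition collinear :: "('k::field \<Rightarrow> 'v::ab_group_add \<Rightarrow> 'v) \<Rightarrow> ('v \<Rightarrow> 'v \<Rightarrow> 'v) \<Rightarrow> 'v \<Rightarrow> 'v \<Rightarrow> bool" where
  "collinear sm br a b \<longleftrightarrow> pure_extremal sm br a \<and> pure_extremal sm br b \<and>
     line_span sm a \<noteq> line_span sm b \<and> br a b = 0 \<and>
     (\<forall>s t. sm s a + sm t b \<in> extremal_set sm br \<union> {0})"

definition has_lines :: "('k::field \<Rightarrow> 'v::ab_group_add \<Rightarrow> 'v) \<Rightarrow> ('v \<Rightarrow> 'v \<Rightarrow> 'v) \<Rightarrow> bool" where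
  "has_lines sm br \<longleftrightarrow> (\<exists>a b. collinear sm br a b)"

text \<open>The 5-grading associated with (a,b); indices outside -2..2 give {0}.\<close>
definition grading_U :: "('v \<Rightarrow> 'v \<Rightarrow> 'v) \<Rightarrow> ('v \<Rightarrow> 'v \<Rightarrow> 'k::field) \<Rightarrow> 'v \<Rightarrow> 'v \<Rightarrow> 'v set" where
  "grading_U br g a b = {u. g u a = 0 \<and> g u b = 0 \<and> g u (br a b) = 0}"

definition grading :: "('k::field \<Rightarrow> 'v::ab_group_add \<Rightarrow> 'v) \<Rightarrow> ('v \<Rightarrow> 'v \<Rightarrow> 'v) \<Rightarrow> ('v \<Rightarrow> 'v \<Rightarrow> 'k)
    \<Rightarrow> 'v \<Rightarrow> 'v \<Rightarrow> int \<Rightarrow> 'v set" where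
  "grading sm br g a b i =
     (if i = -2 then line_span sm a
      else if i = -1 then br a ` grading_U br g a b
      else if i = 0 then {l. br a l \<in> line_span sm a \<and> br b l \<in> line_span sm b}
      else if i = 1 then br b ` grading_U br g a b
      else if i = 2 then line_span sm b
      else {0})"

definition direct_sum4 :: "'v::ab_group_add set \<Rightarrow> 'v set \<Rightarrow> 'v set \<Rightarrow> 'v set \<Rightarrow> 'v set \<Rightarrow> bool" where
  "direct_sum4 V A B C D \<longleftrightarrow>
     V = {a + b + c + d | a b c d. a \<in> A \<and> b \<in> B \<and> c \<in> C \<and> d \<in> D} \<and>
     (\<forall>a\<in>A. \<forall>b\<in>B. \<forall>c\<in>C. \<forall>d\<in>D. \<forall>a'\<in>A. \<forall>b'\<in>B. \<forall>c'\<in>C. \<forall>d'\<in>D.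
        a + b + c + d = a' + b' + c' + d' \<longrightarrow> a = a' \<and> b = b' \<and> c = c' \<and> d = d')"

end

theory Submission
  imports Defs
begin

locale xlie =
  fixes sm :: "'k::field \<Rightarrow> 'v::ab_group_add \<Rightarrow> 'v" and br :: "'v \<Rightarrow> 'v \<Rightarrow> 'v"
    and g :: "'v \<Rightarrow> 'v \<Rightarrow> 'k"
  assumes simple: "simple_lie_algebra sm br"
    and form: "extremal_form sm br g"
    and generated: "lie_gen sm br {a. pure_extremal sm br a} = UNIV"
    and field_size: "infinite (UNIV :: 'k set) \<or> card (UNIV :: 'k set) \<ge> 4"
begin

lemma lie: "lie_algebra sm br" using simple unfolding simple_lie_algebra_def by blast
lemma vs: "vec_space sm" using lie unfolding lie_algebra_def by blast

lemma sm_add_right[simp]: "sm a (x + y) = sm a x + sm a y" using vs unfolding vec_space_def by blast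
lemma sm_add_left[simp]: "sm (a + b) x = sm a x + sm b x" using vs unfolding vec_space_def by blast
lemma sm_sm[simp]: "sm a (sm b x) = sm (a * b) x" using vs unfolding vec_space_def by blast
lemma sm_one[simp]: "sm 1 x = x" using vs unfolding vec_space_def by blast
lemma sm_zero_left[simp]: "sm 0 x = 0"
proof -
  have "sm 0 x + sm 0 x = sm 0 x" using sm_add_left[of 0 0 x] by simp
  then show ?thesis by simp
qed
lemma sm_zero_right[simp]: "sm a 0 = 0"
proof -
  have "sm a 0 + sm a 0 = sm a 0" using sm_add_right[of a 0 0] by simp
  then show ?thesis by simp
qed
lemma sm_neg_left[simp]: "sm (-a) x = - sm a x"
proof -
  have "sm (-a) x + sm a x = 0" using sm_add_left[of "-a" a x] by simp
  then show ?thesis by (simp add: eq_neg_iff_add_eq_0)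
qed
lemma sm_neg_right[simp]: "sm a (-x) = - sm a x"
proof -
  have "sm a (-x) + sm a x = 0" using sm_add_right[of a "-x" x] by simp
  then show ?thesis by (simp add: eq_neg_iff_add_eq_0)
qed
lemma sm_diff_left[simp]: "sm (a - b) x = sm a x - sm b x"
  using sm_add_left[of a "-b" x] by simp
lemma sm_diff_right[simp]: "sm a (x - y) = sm a x - sm a y"
  using sm_add_right[of a x "-y"] by simp
lemma sm_eq_0: "sm t v = 0 \<Longrightarrow> t \<noteq> 0 \<Longrightarrow> v = 0"
  by (metis sm_one sm_sm sm_zero_right field_class.field_inverse)

lemma br_add_left[simp]: "br (x + y) z = br x z + br y z" using lie unfolding lie_algebra_def by blast
lemma br_add_right[simp]: "br x (y + z) = br x y + br x z" using lie unfolding lie_algebra_def by blast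
lemma br_sm_left[simp]: "br (sm a x) y = sm a (br x y)" using lie unfolding lie_algebra_def by blast
lemma br_sm_right[simp]: "br x (sm a y) = sm a (br x y)" using lie unfolding lie_algebra_def by blast
lemma br_self[simp]: "br x x = 0" using lie unfolding lie_algebra_def by blast
lemma jacobi: "br x (br y z) + br y (br z x) + br z (br x y) = 0" using lie unfolding lie_algebra_def by blast
lemma br_zero_left[simp]: "br 0 y = 0" using br_sm_left[of 0 0 y] by simp
lemma br_zero_right[simp]: "br y 0 = 0" using br_sm_right[of y 0 0] by simp
lemma br_neg_left[simp]: "br (-x) y = - br x y" using br_sm_left[of "-1" x y] by (metis sm_neg_left sm_one)
lemma br_neg_right[simp]: "br y (-x) = - br y x" using br_sm_right[of y "-1" x] by (metis sm_neg_left sm_one)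
lemma br_diff_left[simp]: "br (x - y) z = br x z - br y z" using br_add_left[of x "-y" z] by simp
lemma br_diff_right[simp]: "br z (x - y) = br z x - br z y" using br_add_right[of z x "-y"] by simp
lemma br_anti: "br x y = - br y x"
proof -
  have "br (x+y) (x+y) = br x x + br x y + (br y x + br y y)" by (simp del: br_self add: algebra_simps)
  then have "br x y + br y x = 0" by (simp only: br_self) simp
  then show ?thesis by (simp add: eq_neg_iff_add_eq_0)
qed
lemma jac: "br a (br b c) = br (br a b) c + br b (br a c)"
proof -
  have "br a (br b c) + br b (br c a) + br c (br a b) = 0" by (rule jacobi)
  moreover have "br b (br c a) = - br b (br a c)" by (subst br_anti) simp
  moreover have "br c (br a b) = - br (br a b) c" by (rule br_anti)
  ultimately show ?thesis by (simp add: algebra_simps eq_neg_iff_add_eq_0)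
qed

lemma g_add_left[simp]: "g (x + y) z = g x z + g y z" using form unfolding extremal_form_def by blast
lemma g_sm_left[simp]: "g (sm a x) y = a * g x y" using form unfolding extremal_form_def by blast
lemma g_sym: "g x y = g y x" using form unfolding extremal_form_def by blast
lemma g_add_right[simp]: "g z (x + y) = g z x + g z y" by (metis g_sym g_add_left)
lemma g_sm_right[simp]: "g y (sm a x) = a * g y x" by (metis g_sym g_sm_left)
lemma g_zero_left[simp]: "g 0 y = 0" using g_sm_left[of 0 0 y] by simp
lemma g_zero_right[simp]: "g y 0 = 0" using g_sm_right[of y 0 0] by simp
lemma g_neg_left[simp]: "g (-x) y = - g x y" using g_sm_left[of "-1" x y] by (metis sm_neg_left sm_one mult_minus1)
lemma g_neg_right[simp]: "g y (-x) = - g y x" using g_sm_right[of y "-1" x] by (metis sm_neg_left sm_one mult_minus1)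
lemma g_diff_left[simp]: "g (x - y) z = g x z - g y z" using g_add_left[of x "-y" z] by simp
lemma g_diff_right[simp]: "g z (x - y) = g z x - g z y" using g_add_right[of z x "-y"] by simp

abbreviation "EE \<equiv> extremal_set sm br"

lemma ext_g: "a \<in> EE \<Longrightarrow> extremal_with sm br a (g a)"
  using form unfolding extremal_form_def by blast
lemma ext_nz: "a \<in> EE \<Longrightarrow> a \<noteq> 0" unfolding extremal_set_def extremal_def by blast
lemma E1: "a \<in> EE \<Longrightarrow> br a (br a u) = sm (2 * g a u) a"
  using ext_g unfolding extremal_with_def by blast
lemma E2: "a \<in> EE \<Longrightarrow> br (br a u) (br a w) = sm (g a (br u w)) a + sm (g a w) (br a u) - sm (g a u) (br a w)"
  using ext_g unfolding extremal_with_def by blast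
lemma E3: "a \<in> EE \<Longrightarrow> br a (br u (br a w)) = sm (g a (br u w)) a - sm (g a w) (br a u) - sm (g a u) (br a w)"
  using ext_g unfolding extremal_with_def by blast

lemma line_ideal:
  assumes "\<forall>w. br a w \<in> line_span sm a"
  shows "lie_ideal sm br (line_span sm a)"
  unfolding lie_ideal_def lin_subspace_def
proof (intro conjI ballI allI)
  show "0 \<in> line_span sm a" unfolding line_span_def by (rule range_eqI[of _ _ 0]) simp
  fix u v assume "u \<in> line_span sm a" "v \<in> line_span sm a"
  then obtain s t where "u = sm s a" "v = sm t a" unfolding line_span_def by blast
  then show "u + v \<in> line_span sm a" unfolding line_span_def by (intro range_eqI[of _ _ "s+t"]) simp
next
  fix r u assume "u \<in> line_span sm a"
  then obtain s where "u = sm s a" unfolding line_span_def by blast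
  then show "sm r u \<in> line_span sm a" unfolding line_span_def by (intro range_eqI[of _ _ "r*s"]) simp
next
  fix z u assume "u \<in> line_span sm a"
  then obtain s where u: "u = sm s a" unfolding line_span_def by blast
  obtain t where "br a z = sm t a" using assms unfolding line_span_def by blast
  then have "br z u = sm (- (s*t)) a" using u by (subst br_anti) simp
  then show "br z u \<in> line_span sm a" unfolding line_span_def by blast
qed

lemma Z:
  assumes a: "a \<in> EE"
  shows "g a a = 0" "g a (br a w) = 0"
proof -
  have key: "sm (g a (br a v)) a = sm (g a a) (br a v)" for v
  proof -
    have "br a (br a (br a v)) = sm (g a (br a v)) a - sm (g a v) (br a a) - sm (g a a) (br a v)"
      using E3[OF a, of a v] .
    moreover have "br a (br a (br a v)) = 0" using E1[OF a, of v] by simp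
    ultimately show ?thesis by simp
  qed
  show ga: "g a a = 0"
  proof (rule ccontr)
    assume ne: "g a a \<noteq> 0"
    have "\<forall>w. br a w \<in> line_span sm a"
    proof
      fix w
      have "br a w = sm (inverse (g a a)) (sm (g a a) (br a w))" using ne by simp
      also have "\<dots> = sm (inverse (g a a)) (sm (g a (br a w)) a)" by (simp only: key)
      also have "\<dots> = sm (inverse (g a a) * g a (br a w)) a" by simp
      finally show "br a w \<in> line_span sm a" unfolding line_span_def by blast
    qed
    then have "lie_ideal sm br (line_span sm a)" by (rule line_ideal)
    then have "line_span sm a = {0} \<or> line_span sm a = UNIV"
      using simple unfolding simple_lie_algebra_def by blast
    moreover have "a \<in> line_span sm a" unfolding line_span_def by (rule range_eqI[of _ _ 1]) simp
    moreover have "a \<noteq> 0" using ext_nz[OF a] .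
    moreover obtain u w where uw: "br u w \<noteq> 0" using simple unfolding simple_lie_algebra_def by blast
    ultimately have "line_span sm a = UNIV" by blast
    then obtain s t where "u = sm s a" "w = sm t a" unfolding line_span_def by (metis UNIV_I imageE)
    then have "br u w = 0" by simp
    with uw show False by simp
  qed
  show "g a (br a w) = 0"
  proof -
    have "sm (g a (br a w)) a = 0" using key[of w] ga by simp
    then show ?thesis using sm_eq_0 ext_nz[OF a] by blast
  qed
qed


lemma E1': assumes a: "a \<in> EE" shows "br a (br a u) = sm (g a u) a + sm (g a u) a"
proof -
  have "sm (2 * g a u) a = sm (g a u + g a u) a" by (simp only: mult_2)
  then show ?thesis using E1[OF a, of u] by (simp only: sm_add_left)
qed

definition hom :: "('v \<Rightarrow> 'v) \<Rightarrow> bool" where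
  "hom \<phi> \<longleftrightarrow> (\<forall>x y. \<phi> (x+y) = \<phi> x + \<phi> y) \<and> (\<forall>t x. \<phi> (sm t x) = sm t (\<phi> x)) \<and> (\<forall>x y. \<phi> (br x y) = br (\<phi> x) (\<phi> y))"

lemma hom_add: "hom \<phi> \<Longrightarrow> \<phi> (x+y) = \<phi> x + \<phi> y" unfolding hom_def by blast
lemma hom_sm: "hom \<phi> \<Longrightarrow> \<phi> (sm t x) = sm t (\<phi> x)" unfolding hom_def by blast
lemma hom_br: "hom \<phi> \<Longrightarrow> \<phi> (br x y) = br (\<phi> x) (\<phi> y)" unfolding hom_def by blast
lemma hom_zero: "hom \<phi> \<Longrightarrow> \<phi> 0 = 0" using hom_sm[of \<phi> 0 0] by simp
lemma hom_neg: "hom \<phi> \<Longrightarrow> \<phi> (-x) = - \<phi> x" using hom_sm[of \<phi> "-1" x] by (metis sm_neg_left sm_one)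
lemma hom_diff: "hom \<phi> \<Longrightarrow> \<phi> (x - y) = \<phi> x - \<phi> y" using hom_add[of \<phi> x "-y"] hom_neg[of \<phi> y] by simp

lemma transport:
  assumes h1: "hom \<phi>" and h2: "hom \<psi>" and inv: "\<And>x. \<phi> (\<psi> x) = x"
    and ex: "extremal_with sm br b f"
  shows "extremal_with sm br (\<phi> b) (\<lambda>z. f (\<psi> z))"
  unfolding extremal_with_def
proof (intro conjI allI)
  fix u
  have "\<phi> (br b (br b (\<psi> u))) = \<phi> (sm (2 * f (\<psi> u)) b)" using ex unfolding extremal_with_def by simp
  then show "br (\<phi> b) (br (\<phi> b) u) = sm (2 * f (\<psi> u)) (\<phi> b)"
    by (simp add: hom_br[OF h1] hom_sm[OF h1] inv)
next
  fix u w
  have "\<phi> (br (br b (\<psi> u)) (br b (\<psi> w))) = \<phi> (sm (f (br (\<psi> u) (\<psi> w))) b + sm (f (\<psi> w)) (br b (\<psi> u)) - sm (f (\<psi> u)) (br b (\<psi> w)))"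
    using ex unfolding extremal_with_def by simp
  then show "br (br (\<phi> b) u) (br (\<phi> b) w) = sm (f (\<psi> (br u w))) (\<phi> b) + sm (f (\<psi> w)) (br (\<phi> b) u) - sm (f (\<psi> u)) (br (\<phi> b) w)"
    by (simp add: hom_br[OF h1] hom_sm[OF h1] hom_add[OF h1] hom_diff[OF h1] hom_br[OF h2] inv)
next
  fix u w
  have "\<phi> (br b (br (\<psi> u) (br b (\<psi> w)))) = \<phi> (sm (f (br (\<psi> u) (\<psi> w))) b - sm (f (\<psi> w)) (br b (\<psi> u)) - sm (f (\<psi> u)) (br b (\<psi> w)))"
    using ex unfolding extremal_with_def by simp
  then show "br (\<phi> b) (br u (br (\<phi> b) w)) = sm (f (\<psi> (br u w))) (\<phi> b) - sm (f (\<psi> w)) (br (\<phi> b) u) - sm (f (\<psi> u)) (br (\<phi> b) w)"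
    by (simp add: hom_br[OF h1] hom_sm[OF h1] hom_add[OF h1] hom_diff[OF h1] hom_br[OF h2] inv)
qed

lemma transport_ext:
  assumes h1: "hom \<phi>" and h2: "hom \<psi>" and inv: "\<And>x. \<phi> (\<psi> x) = x" and inv2: "\<And>x. \<psi> (\<phi> x) = x"
    and b: "b \<in> EE"
  shows "\<phi> b \<in> EE"
proof -
  obtain f where f: "extremal_with sm br b f" and nz: "b \<noteq> 0" using b unfolding extremal_set_def extremal_def by blast
  have "\<phi> b \<noteq> 0" using nz inv2[of b] hom_zero[OF h2] by metis
  then show ?thesis using transport[OF h1 h2 inv f] unfolding extremal_set_def extremal_def by blast
qed

lemma transport_sand:
  assumes h1: "hom \<phi>" and h2: "hom \<psi>" and inv: "\<And>x. \<phi> (\<psi> x) = x" and inv2: "\<And>x. \<psi> (\<phi> x) = x"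
    and b: "sandwich sm br b"
  shows "sandwich sm br (\<phi> b)"
proof -
  have bE: "b \<in> EE" using b unfolding sandwich_def extremal_set_def by blast
  have "\<phi> b \<in> EE" by (rule transport_ext[OF h1 h2 inv inv2 bE])
  moreover have "br (\<phi> b) (br (\<phi> b) u) = 0" for u
  proof -
    have "\<phi> (br b (br b (\<psi> u))) = 0" using b hom_zero[OF h1] unfolding sandwich_def by simp
    then show ?thesis by (simp add: hom_br[OF h1] inv)
  qed
  moreover have "br (\<phi> b) (br u (br (\<phi> b) w)) = 0" for u w
  proof -
    have "\<phi> (br b (br (\<psi> u) (br b (\<psi> w)))) = 0" using b hom_zero[OF h1] unfolding sandwich_def by simp
    then show ?thesis by (simp add: hom_br[OF h1] inv)
  qed
  ultimately show ?thesis unfolding sandwich_def extremal_set_def by blast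
qed

definition ex :: "'k \<Rightarrow> 'v \<Rightarrow> 'v \<Rightarrow> 'v" where
  "ex t a u = u + sm t (br a u) + sm (t*t*g a u) a"

lemma ex_br:
  assumes a: "a \<in> EE"
  shows "ex t a (br u w) = br (ex t a u) (ex t a w)"
proof -
  define A where "A = br a u"
  define B where "B = br a w"
  have e1: "br (ex t a u) (ex t a w) = br u w + sm t (br u B) + sm (t*t*g a w) (br u a) + sm t (br A w)
     + sm (t*t) (br A B) + sm (t*(t*t*g a w)) (br A a) + sm (t*t*g a u) (br a w) + sm (t*t*g a u*t) (br a B)"
    unfolding ex_def A_def B_def by (simp add: algebra_simps)
  have f1: "br A B = sm (g a (br u w)) a + sm (g a w) A - sm (g a u) B" unfolding A_def B_def by (rule E2[OF a])
  have f2: "br A a = - sm (2 * g a u) a" unfolding A_def by (subst br_anti) (simp add: E1[OF a])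
  have f3: "br a B = sm (2 * g a w) a" unfolding B_def by (simp add: E1[OF a])
  have f4: "br u a = - A" unfolding A_def by (rule br_anti)
  have f5: "br a (br u w) = br A w + br u B" unfolding A_def B_def by (rule jac)
  show ?thesis unfolding e1 f1 f2 f3 f4
    by (simp add: ex_def f5 algebra_simps B_def)
qed

lemma ex_hom: assumes a: "a \<in> EE" shows "hom (ex t a)"
  unfolding hom_def
proof (intro conjI allI)
  show "ex t a (x + y) = ex t a x + ex t a y" for x y by (simp add: ex_def algebra_simps)
  show "ex t a (sm s x) = sm s (ex t a x)" for s x by (simp add: ex_def algebra_simps)
  show "ex t a (br x y) = br (ex t a x) (ex t a y)" for x y by (rule ex_br[OF a])
qed

lemma ex_inv: assumes a: "a \<in> EE" shows "ex (-t) a (ex t a u) = u"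
proof -
  have "br a (ex t a u) = br a u + sm (t*g a u) a + sm (t*g a u) a" unfolding ex_def by (simp add: E1'[OF a] algebra_simps)
  moreover have "g a (ex t a u) = g a u" unfolding ex_def by (simp add: Z[OF a])
  ultimately show ?thesis unfolding ex_def[of "-t" a] by (simp add: ex_def algebra_simps)
qed


lemma two_zero_neg: assumes "(2::'k) = 0" shows "- (x::'v) = x"
proof -
  have "sm (1+1) x = x + x" by (simp only: sm_add_left sm_one)
  moreover have "(1::'k) + 1 = 2" by simp
  ultimately have "x + x = 0" using assms by (metis sm_zero_left)
  then show ?thesis by (simp add: minus_unique)
qed

lemma uniq:
  assumes f1: "extremal_with sm br u f1" and f2: "extremal_with sm br u f2"
    and l1: "\<And>x y. f1 (x+y) = f1 x + f1 y" and l1s: "\<And>s x. f1 (sm s x) = s * f1 x"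
    and l2: "\<And>x y. f2 (x+y) = f2 x + f2 y" and l2s: "\<And>s x. f2 (sm s x) = s * f2 x"
    and ns: "\<not> sandwich sm br u" and nz: "u \<noteq> 0"
  shows "f1 w = f2 w"
proof (rule ccontr)
  assume ne: "f1 w \<noteq> f2 w"
  define \<delta> where "\<delta> z = f1 z - f2 z" for z
  have e1: "br u (br u z) = sm (2 * f1 z) u" for z using f1 unfolding extremal_with_def by blast
  have e1b: "br u (br u z) = sm (2 * f2 z) u" for z using f2 unfolding extremal_with_def by blast
  have two: "(2::'k) = 0"
  proof -
    have "sm (2 * f1 w - 2 * f2 w) u = 0" using e1[of w] e1b[of w] by simp
    then have "2 * f1 w - 2 * f2 w = 0" using sm_eq_0 nz by blast
    then have "2 * (f1 w - f2 w) = 0" by (simp add: algebra_simps)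
    then show ?thesis using ne by simp
  qed
  have E2a: "br (br u v) (br u z) = sm (f1 (br v z)) u + sm (f1 z) (br u v) - sm (f1 v) (br u z)" for v z
    using f1 unfolding extremal_with_def by blast
  have E2b: "br (br u v) (br u z) = sm (f2 (br v z)) u + sm (f2 z) (br u v) - sm (f2 v) (br u z)" for v z
    using f2 unfolding extremal_with_def by blast
  have E3a: "br u (br v (br u z)) = sm (f1 (br v z)) u - sm (f1 z) (br u v) - sm (f1 v) (br u z)" for v z
    using f1 unfolding extremal_with_def by blast
  have R: "sm (\<delta> (br v z)) u + sm (\<delta> z) (br u v) - sm (\<delta> v) (br u z) = 0" for v z
    using E2a[of v z] E2b[of v z] unfolding \<delta>_def by (simp add: algebra_simps)
  define e where "e = \<delta> w"
  have ene: "e \<noteq> 0" using ne unfolding e_def \<delta>_def by simp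
  define p where "p = br u w"
  have lin: "br u z = sm (\<delta> (br w z) / e) u + sm (\<delta> z / e) p" for z
  proof -
    have "sm e (br u z) = sm (\<delta> (br w z)) u + sm (\<delta> z) p"
      using R[of w z] unfolding e_def p_def by (simp add: algebra_simps)
    then have "sm (inverse e) (sm e (br u z)) = sm (inverse e) (sm (\<delta> (br w z)) u + sm (\<delta> z) p)" by simp
    then show ?thesis using ene by (simp add: divide_inverse mult.commute)
  qed
  have up: "br u p = 0" unfolding p_def using e1[of w] two by simp
  have pu: "br p u = 0" using up by (subst br_anti) simp
  have K: "br (br u v) (br u z) = 0" for v z
    by (simp add: lin[of v] lin[of z] up pu)
  have "sandwich sm br u" unfolding sandwich_def
  proof (intro conjI allI)
    show "extremal sm br u" unfolding extremal_def using nz f1 by blast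
    show "br u (br u z) = 0" for z using e1[of z] two by simp
    show "br u (br v (br u z)) = 0" for v z
    proof -
      have "br u (br v (br u z)) = br (br u v) (br u z) - (sm (f1 z) (br u v) + sm (f1 z) (br u v))"
        by (simp only: E3a E2a) (simp add: algebra_simps)
      also have "sm (f1 z) (br u v) + sm (f1 z) (br u v) = 0"
        using two_zero_neg[OF two, of "sm (f1 z) (br u v)"] by (metis right_minus)
      finally show ?thesis using K by simp
    qed
  qed
  with ns show False by blast
qed

lemma pure_E: "pure_extremal sm br a \<Longrightarrow> a \<in> EE"
  unfolding pure_extremal_def extremal_set_def by blast

lemma ex_inv2: "a \<in> EE \<Longrightarrow> ex t a (ex (-t) a x) = x"
  using ex_inv[of a "-t" x] by simp

lemma ex_pure:
  assumes a: "a \<in> EE" and u: "pure_extremal sm br u"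
  shows "pure_extremal sm br (ex t a u)"
proof -
  have h1: "hom (ex t a)" and h2: "hom (ex (-t) a)" using ex_hom[OF a] by auto
  have "ex t a u \<in> EE" using transport_ext[OF h1 h2 ex_inv2[OF a] ex_inv[OF a] pure_E[OF u]] .
  moreover have "\<not> sandwich sm br (ex t a u)"
  proof
    assume "sandwich sm br (ex t a u)"
    then have "sandwich sm br (ex (-t) a (ex t a u))"
      by (rule transport_sand[OF h2 h1 ex_inv[OF a] ex_inv2[OF a]])
    then show False using u ex_inv[OF a] unfolding pure_extremal_def by simp
  qed
  ultimately show ?thesis unfolding pure_extremal_def extremal_set_def by blast
qed

lemma exists_s: "\<exists>s::'k. s \<noteq> 0 \<and> s \<noteq> 1"
proof (rule ccontr)
  assume "\<not> ?thesis"
  then have U: "UNIV = {0::'k, 1}" by auto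
  have "finite (UNIV::'k set)" by (simp add: U)
  moreover have "card (UNIV::'k set) = 2" by (simp add: U)
  ultimately show False using field_size by simp
qed

lemma skew_pure:
  assumes a: "a \<in> EE" and u: "pure_extremal sm br u"
  shows "g (br a u) w + g u (br a w) = 0"
proof -
  have key: "g (ex t a u) (ex t a w) = g u w" for t
  proof -
    have h1: "hom (ex t a)" and h2: "hom (ex (-t) a)" using ex_hom[OF a] by auto
    have uE: "u \<in> EE" using pure_E[OF u] .
    have "ex t a u \<in> EE" using transport_ext[OF h1 h2 ex_inv2[OF a] ex_inv[OF a] uE] .
    then have "extremal_with sm br (ex t a u) (g (ex t a u))" by (rule ext_g)
    then have "extremal_with sm br (ex (-t) a (ex t a u)) (\<lambda>z. g (ex t a u) (ex t a z))"
      by (rule transport[OF h2 h1 ex_inv[OF a]])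
    then have f2: "extremal_with sm br u (\<lambda>z. g (ex t a u) (ex t a z))" using ex_inv[OF a] by simp
    have "g u w = g (ex t a u) (ex t a w)"
    proof (rule uniq[OF ext_g[OF uE] f2])
      show "g (ex t a u) (ex t a (x + y)) = g (ex t a u) (ex t a x) + g (ex t a u) (ex t a y)" for x y
        by (simp add: hom_add[OF h1])
      show "g (ex t a u) (ex t a (sm s x)) = s * g (ex t a u) (ex t a x)" for s x
        by (simp add: hom_sm[OF h1])
      show "g u (x + y) = g u x + g u y" for x y by simp
      show "g u (sm s x) = s * g u x" for s x by simp
      show "\<not> sandwich sm br u" using u unfolding pure_extremal_def by blast
      show "u \<noteq> 0" using ext_nz[OF uE] .
    qed
    then show ?thesis by simp
  qed
  define c1 where "c1 = g (br a u) w + g u (br a w)"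
  define c2 where "c2 = g (br a u) (br a w) + g a u * g a w + g a w * g u a"
  have z1: "g (br a u) a = 0" using Z(2)[OF a, of u] by (simp add: g_sym)
  have exp: "g (ex t a u) (ex t a w) = g u w + t * c1 + t * t * c2" for t
    unfolding ex_def c1_def c2_def by (simp add: algebra_simps Z[OF a] z1)
  have P: "t * c1 + t * t * c2 = 0" for t using key[of t] exp[of t] by simp
  obtain s :: 'k where s: "s \<noteq> 0" "s \<noteq> 1" using exists_s by blast
  have "c1 + c2 = 0" using P[of 1] by simp
  then have "c2 = - c1" by (simp add: eq_neg_iff_add_eq_0 add.commute)
  then have "s * c1 - s * s * c1 = 0" using P[of s] by simp
  then have "s * (1 - s) * c1 = 0" by (simp add: algebra_simps)
  then have "c1 = 0" using s by simp
  then show ?thesis unfolding c1_def .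
qed


inductive_set pspan :: "'v set" where
  pgen: "pure_extremal sm br a \<Longrightarrow> a \<in> pspan"
| pzero: "0 \<in> pspan"
| padd: "x \<in> pspan \<Longrightarrow> y \<in> pspan \<Longrightarrow> x + y \<in> pspan"
| pscale: "x \<in> pspan \<Longrightarrow> sm t x \<in> pspan"

lemma pdiff: "x \<in> pspan \<Longrightarrow> y \<in> pspan \<Longrightarrow> x - y \<in> pspan"
  using padd[of x "sm (-1) y"] pscale[of y "-1"] by simp

lemma br_pure_span:
  assumes a: "pure_extremal sm br a" and b: "pure_extremal sm br b"
  shows "br a b \<in> pspan"
proof -
  have aE: "a \<in> EE" using pure_E[OF a] .
  have "br a b = ex 1 a b - b - sm (g a b) a" unfolding ex_def by simp
  moreover have "ex 1 a b \<in> pspan" using pgen[OF ex_pure[OF aE b]] .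
  ultimately show ?thesis using pdiff pgen[OF a] pgen[OF b] pscale by metis
qed

lemma br_span1: assumes a: "pure_extremal sm br a" shows "y \<in> pspan \<Longrightarrow> br a y \<in> pspan"
proof (induction rule: pspan.induct)
  case (pgen b) then show ?case using br_pure_span[OF a] by blast
next
  case pzero then show ?case by (simp add: pspan.pzero)
next
  case (padd x y) then show ?case by (simp add: pspan.padd)
next
  case (pscale x t) then show ?case by (simp add: pspan.pscale)
qed

lemma br_span: "x \<in> pspan \<Longrightarrow> y \<in> pspan \<Longrightarrow> br x y \<in> pspan"
proof (induction arbitrary: y rule: pspan.induct)
  case (pgen a) then show ?case using br_span1 by blast
next
  case pzero then show ?case by (simp add: pspan.pzero)
next
  case (padd x1 x2) then show ?case by (simp add: pspan.padd)
next
  case (pscale x t) then show ?case by (simp add: pspan.pscale)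
qed

lemma all_span: "z \<in> pspan"
proof -
  have "z \<in> lie_gen sm br {a. pure_extremal sm br a}" using generated by simp
  then show ?thesis
  proof (induction rule: lie_gen.induct)
    case (gen x) then show ?case by (simp add: pgen)
  next
    case zero then show ?case by (rule pzero)
  next
    case (add x y) then show ?case by (blast intro: padd)
  next
    case (scale x a) then show ?case by (blast intro: pscale)
  next
    case (bracket x y) then show ?case by (blast intro: br_span)
  qed
qed

lemma skewE: assumes a: "a \<in> EE" shows "g (br a v) w + g v (br a w) = 0"
proof -
  have "v \<in> pspan" by (rule all_span)
  then show ?thesis
  proof (induction arbitrary: w rule: pspan.induct)
    case (pgen u) then show ?case using skew_pure[OF a] by blast
  next
    case pzero then show ?case by simp
  next
    case (padd x y)
    have "g (br a (x+y)) w + g (x+y) (br a w) = (g (br a x) w + g x (br a w)) + (g (br a y) w + g y (br a w))"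
      by (simp add: algebra_simps)
    then show ?case using padd.IH[of w] by simp
  next
    case (pscale x t)
    have "g (br a (sm t x)) w + g (sm t x) (br a w) = t * (g (br a x) w + g x (br a w))"
      by (simp add: algebra_simps)
    then show ?case using pscale.IH[of w] by simp
  qed
qed

lemma skew: "g (br b v) w + g v (br b w) = 0"
proof -
  have "b \<in> pspan" by (rule all_span)
  then show ?thesis
  proof (induction arbitrary: v w rule: pspan.induct)
    case (pgen u) then show ?case using skewE[OF pure_E] by blast
  next
    case pzero then show ?case by simp
  next
    case (padd x y)
    have "g (br (x+y) v) w + g v (br (x+y) w) = (g (br x v) w + g v (br x w)) + (g (br y v) w + g v (br y w))"
      by (simp add: algebra_simps)
    then show ?case using padd.IH[of v w] by simp
  next
    case (pscale x t)
    have "g (br (sm t x) v) w + g v (br (sm t x) w) = t * (g (br x v) w + g v (br x w))"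
      by (simp add: algebra_simps)
    then show ?case using pscale.IH[of v w] by simp
  qed
qed

lemma inv: "g (br a b) w = g a (br b w)"
proof -
  have "g (br b a) w + g a (br b w) = 0" by (rule skew)
  moreover have "br b a = - br a b" by (rule br_anti)
  ultimately show ?thesis by (simp add: eq_neg_iff_add_eq_0 add.commute)
qed


lemma ex_E: assumes a: "a \<in> EE" and b: "b \<in> EE" shows "ex t a b \<in> EE"
proof -
  have h1: "hom (ex t a)" and h2: "hom (ex (-t) a)" using ex_hom[OF a] by auto
  show ?thesis using transport_ext[OF h1 h2 ex_inv2[OF a] ex_inv[OF a] b] .
qed

lemma inv': "g a (br b w) = g (br a b) w" by (simp add: inv)

lemma dbl: fixes z :: 'k assumes "z = 2 * z" shows "z = 0"
  using assms by (metis add_cancel_right_right mult_2)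

lemma m1_fwd:
  assumes a: "a \<in> EE" and ab: "g a b = 1" and l: "l \<in> br a ` grading_U br g a b"
  shows "br a (br b l) = -l" "br a l = 0" "g l a = 0" "g l b = 0"
proof -
  obtain u where lu: "l = br a u" and u1: "g u a = 0" and u2: "g u b = 0" and u3: "g u (br a b) = 0"
    using l unfolding grading_U_def by blast
  have "g a (br b u) = g (br a b) u" by (rule inv')
  also have "\<dots> = g u (br a b)" by (rule g_sym)
  finally have "g a (br b u) = g u (br a b)" .
  then have "g a (br b u) = 0" using u3 by simp
  then show "br a (br b l) = -l" unfolding lu using E3[OF a, of b u] u1 ab by (simp add: g_sym)
  show "br a l = 0" unfolding lu using E1[OF a, of u] u1 by (simp add: g_sym)
  show "g l a = 0" unfolding lu using Z(2)[OF a, of u] by (simp add: g_sym)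
  have "g (br a u) b = - g (br u a) b" by (subst br_anti) simp
  then show "g l b = 0" unfolding lu using u3 by (simp add: inv)
qed

lemma m1_bwd:
  assumes a: "a \<in> EE" and b: "b \<in> EE" and ab: "g a b = 1" and l: "br a (br b l) = -l"
  shows "l \<in> br a ` grading_U br g a b" "g a (br b l) = 0"
proof -
  define G where "G = g a (br b l)"
  have t3: "br (br a b) a = - sm 2 a" using E1[OF a, of b] ab by (subst br_anti) simp
  have "G = g (br a b) l" unfolding G_def by (rule inv')
  also have "\<dots> = - g (br a b) (br a (br b l))" using l by simp
  also have "\<dots> = - g (br (br a b) a) (br b l)" by (simp add: inv)
  finally have "G = - g (br (br a b) a) (br b l)" .
  then have "G = - g (- sm 2 a) (br b l)" by (simp only: t3)
  then have "G = 2 * G" unfolding G_def by simp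
  then show G0: "g a (br b l) = 0" unfolding G_def by (rule dbl)
  define u where "u = - br b l"
  have lu: "l = br a u" unfolding u_def using l by simp
  have bal: "br a l = 0"
  proof -
    have "br a l = br a (- br a (br b l))" using l by simp
    then have "br a l = - br a (br a (br b l))" by simp
    then show ?thesis using E1[OF a, of "br b l"] G0 by simp
  qed
  have la: "br l a = 0" using bal by (subst br_anti) simp
  have "g u a = - g b (br l a)" unfolding u_def by (simp add: inv)
  then have u1: "g u a = 0" using la by simp
  have lb: "br l b = - br b l" by (rule br_anti)
  have "g u b = - g b (br l b)" unfolding u_def by (simp add: inv)
  then have "g u b = g b (br b l)" using lb by simp
  then have u2: "g u b = 0" by (simp add: inv')
  have t4: "br (br b l) b = - sm (2 * g b l) b" using E1[OF b, of l] by (subst br_anti) simp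
  have glb: "g l b = 0"
  proof -
    have "g l b = g (- br a (br b l)) b" using l by simp
    then have "g l b = - g (br a (br b l)) b" by simp
    also have "\<dots> = - g a (br (br b l) b)" by (simp add: inv)
    finally have "g l b = - g a (br (br b l) b)" .
    then have "g l b = - g a (- sm (2 * g b l) b)" by (simp only: t4)
    then have "g l b = 2 * g b l" using ab by simp
    then have "g l b = 2 * g l b" by (simp only: g_sym)
    then show ?thesis by (rule dbl)
  qed
  have t5: "br (br b l) a = l" using l by (subst br_anti) simp
  have "g u (br a b) = - g (br (br b l) a) b" unfolding u_def by (simp add: inv)
  then have u3: "g u (br a b) = 0" using glb by (simp only: t5) simp
  have "u \<in> grading_U br g a b" unfolding grading_U_def using u1 u2 u3 by simp
  with lu show "l \<in> br a ` grading_U br g a b" by (intro image_eqI[of l "br a" u])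
qed

lemma m1_char:
  assumes a: "a \<in> EE" and b: "b \<in> EE" and ab: "g a b = 1"
  shows "l \<in> br a ` grading_U br g a b \<longleftrightarrow> br a (br b l) = -l"
proof
  assume "l \<in> br a ` grading_U br g a b"
  then show "br a (br b l) = -l" by (rule m1_fwd(1)[OF a ab])
next
  assume "br a (br b l) = -l"
  then show "l \<in> br a ` grading_U br g a b" by (rule m1_bwd(1)[OF a b ab])
qed

lemma m1_br:
  assumes a: "a \<in> EE" and l1: "l1 \<in> br a ` grading_U br g a b" and l2: "l2 \<in> br a ` grading_U br g a b"
  shows "\<exists>k. br l1 l2 = sm k a"
proof -
  obtain u where lu: "l1 = br a u" and u1: "g u a = 0"
    using l1 unfolding grading_U_def by blast
  obtain w where lw: "l2 = br a w" and w1: "g w a = 0"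
    using l2 unfolding grading_U_def by blast
  have "br l1 l2 = sm (g a (br u w)) a" unfolding lu lw using E2[OF a, of u w] u1 w1 by (simp add: g_sym)
  then show ?thesis by blast
qed

lemma in_line: "z \<in> line_span sm a \<longleftrightarrow> (\<exists>t. z = sm t a)" unfolding line_span_def by auto


lemma main:
  assumes xE: "x \<in> EE" and yE: "y \<in> EE" and gxy: "g x y = 1"
    and cE: "c \<in> EE \<inter> grading sm br g x y (-1)"
    and dE: "d \<in> EE \<inter> grading sm br g x y (-1)"
    and cd: "br c d = x"
  shows "direct_sum4 (grading sm br g x y (-1))
           (line_span sm c)
           (grading sm br g x y (-1) \<inter> grading sm br g c (- br y d) (-1))
           (grading sm br g x y (-1) \<inter> grading sm br g c (- br y d) 0)
           (line_span sm d)
         \<and> grading sm br g x y (-1) \<inter> grading sm br g c (- br y d) 1 = line_span sm d"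
proof -
  define Lm where "Lm = br x ` grading_U br g x y"
  have Lm_eq: "grading sm br g x y (-1) = Lm" unfolding grading_def Lm_def by simp
  have cE': "c \<in> EE" and cL: "c \<in> Lm" and dE': "d \<in> EE" and dL: "d \<in> Lm"
    using cE dE Lm_eq by auto
  have Lchar: "l \<in> Lm \<longleftrightarrow> br x (br y l) = -l" for l
    unfolding Lm_def by (rule m1_char[OF xE yE gxy])
  have Lx: "br x l = 0" if "l \<in> Lm" for l using m1_fwd(2)[OF xE gxy] that unfolding Lm_def by blast
  have Lgx: "g l x = 0" if "l \<in> Lm" for l using m1_fwd(3)[OF xE gxy] that unfolding Lm_def by blast
  have Lgy: "g l y = 0" if "l \<in> Lm" for l using m1_fwd(4)[OF xE gxy] that unfolding Lm_def by blast
  have Lxy: "g x (br y l) = 0" if "l \<in> Lm" for l using m1_bwd(2)[OF xE yE gxy] that Lchar by blast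
  have Lbr: "\<exists>k. br l1 l2 = sm k x" if "l1 \<in> Lm" "l2 \<in> Lm" for l1 l2
    using m1_br[OF xE] that unfolding Lm_def by blast
  have Ladd: "l1 + l2 \<in> Lm" if "l1 \<in> Lm" "l2 \<in> Lm" for l1 l2
    using that Lchar by simp
  have Lsm: "sm t l \<in> Lm" if "l \<in> Lm" for t l
    using that Lchar by simp
  have Lneg: "- l \<in> Lm" if "l \<in> Lm" for l
    using that Lchar by simp
  have Ldiff: "l1 - l2 \<in> Lm" if "l1 \<in> Lm" "l2 \<in> Lm" for l1 l2
    using that Lchar by simp

  define q where "q = - br y d"
  have gyd: "g y d = 0" using Lgy[OF dL] by (simp add: g_sym)
  have yq: "br y q = 0" unfolding q_def using E1[OF yE, of d] gyd by simp
  have xyd: "br x (br y d) = -d" using Lchar dL by blast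
  have xq: "br x q = d" unfolding q_def using xyd by simp
  have gxq: "g x q = 0" unfolding q_def using Lxy[OF dL] by simp
  have xd: "br x d = 0" using Lx[OF dL] .
  have xc: "br x c = 0" using Lx[OF cL] .
  have xyc: "br x (br y c) = -c" using Lchar cL by blast
  have qE: "q \<in> EE"
  proof -
    have e1: "ex (-1) y d = d + q" unfolding ex_def q_def using gyd by simp
    have gxd: "g x d = 0" using Lgx[OF dL] by (simp add: g_sym)
    have e2: "ex (-1) x (d + q) = q" unfolding ex_def using xd xq gxq gxd by simp
    have "ex (-1) x (ex (-1) y d) \<in> EE" by (rule ex_E[OF xE ex_E[OF yE dE']])
    then show ?thesis using e1 e2 by simp
  qed
  have gcq: "g c q = 1"
  proof -
    have "g c (br d y) = g (br c d) y" by (rule inv')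
    then have "g c (br d y) = 1" using cd gxy by simp
    moreover have "br y d = - br d y" by (rule br_anti)
    ultimately show ?thesis unfolding q_def by simp
  qed
  have gqc: "g q c = 1" using gcq by (simp add: g_sym)
  define Uc where "Uc = grading_U br g c q"
  define Jm where "Jm = br c ` Uc"
  have Jchar: "l \<in> Jm \<longleftrightarrow> br c (br q l) = -l" for l
    unfolding Jm_def Uc_def by (rule m1_char[OF cE' qE gcq])
  have Jc: "br c l = 0" if "l \<in> Jm" for l using m1_fwd(2)[OF cE' gcq] that unfolding Jm_def Uc_def by blast
  have Jgq: "g l q = 0" if "l \<in> Jm" for l using m1_fwd(4)[OF cE' gcq] that unfolding Jm_def Uc_def by blast
  have Uqc: "grading_U br g q c = Uc"
  proof -
    have "br q c = - br c q" by (rule br_anti)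
    then show ?thesis unfolding grading_U_def Uc_def by auto
  qed
  define J1 where "J1 = br q ` Uc"
  have J1char: "l \<in> J1 \<longleftrightarrow> br q (br c l) = -l" for l
    unfolding J1_def Uqc[symmetric] by (rule m1_char[OF qE cE' gqc])
  define J0 where "J0 = {l. br c l \<in> line_span sm c \<and> br q l \<in> line_span sm q}"
  have qc_ne: "br q c \<noteq> 0"
  proof
    assume qc0: "br q c = 0"
    have "br c q = 0" using qc0 by (subst br_anti) simp
    then have "br c (br q d) = br q (br c d)" by (simp add: jac[of c q d])
    also have "\<dots> = - br x q" using cd by (subst br_anti) simp
    finally have "br c (br q d) = -d" using xq by simp
    then have "d \<in> Jm" using Jchar by blast
    then have "br c d = 0" by (rule Jc)
    then show False using cd ext_nz[OF xE] by simp
  qed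
  have qqc: "br q (br q c) = q + q" using E1'[OF qE, of c] gqc by simp
  have J0q: "g q j = 0" if j: "j \<in> J0" for j
  proof -
    obtain m where m: "br c j = sm m c" using j unfolding J0_def in_line by blast
    obtain n where n: "br q j = sm n q" using j unfolding J0_def in_line by blast
    have "g (br c j) q = m" using m gcq by simp
    moreover have "g (br c j) q = - g c (br q j)"
    proof -
      have "g (br c j) q = g c (br j q)" by (rule inv)
      moreover have "br j q = - br q j" by (rule br_anti)
      ultimately show ?thesis by simp
    qed
    ultimately have mn: "m = - n" using n gcq by simp
    have "g q (br j c) = - g q (br c j)"
    proof -
      have "br j c = - br c j" by (rule br_anti)
      then show ?thesis by simp
    qed
    then have gjc: "g q (br j c) = n" using m mn gqc by simp
    have "br (br q j) (br q c) = sm (g q (br j c)) q + sm (g q c) (br q j) - sm (g q j) (br q c)"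
      by (rule E2[OF qE])
    then have "sm n q + sm n q = sm n q + sm n q - sm (g q j) (br q c)"
      using n qqc gjc gqc by simp
    then have "sm (g q j) (br q c) = 0" by simp
    then show ?thesis using sm_eq_0 qc_ne by blast
  qed
  have J0Jm: "z = 0" if z1: "z \<in> Jm" and z2: "z \<in> J0" for z
  proof -
    obtain n where n: "br q z = sm n q" using z2 unfolding J0_def in_line by blast
    have zz: "z = - br c (br q z)" using Jchar z1 by simp
    then have z': "z = - sm n (br c q)" using n by simp
    have "br q (br c q) = - br q (br q c)" by (subst br_anti) simp
    then have "br q z = sm n q + sm n q" using z' qqc by simp
    then have "sm n q = 0" using n by simp
    then show ?thesis using z' by (metis br_sm_right br_zero_right minus_zero)
  qed
  have jLm: "br c (br q l) \<in> Lm" if l: "l \<in> Lm" for l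
  proof -
    obtain k where k: "br d l = sm k x" using Lbr[OF dL l] by blast
    have xl: "br x l = 0" using Lx[OF l] .
    have xyl: "br x (br y l) = -l" using Lchar l by blast
    define m where "m = br q l"
    have ch: "br c (br y x) = -c"
    proof -
      have "br c (br x y) = br (br c x) y + br x (br c y)" by (rule jac)
      moreover have "br c x = - br x c" by (rule br_anti)
      moreover have "br c y = - br y c" by (rule br_anti)
      ultimately have "br c (br x y) = c" using xc xyc by simp
      moreover have "br y x = - br x y" by (rule br_anti)
      ultimately show ?thesis by simp
    qed
    have s1: "br y (br c m) = br (br y c) m + br c (br y m)" by (rule jac)
    have s2: "br y m = br q (br y l)" unfolding m_def using jac[of y q l] yq by simp
    have s3: "br x m = sm k x" unfolding m_def using jac[of x q l] xq xl k by simp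
    have s4: "br x (br (br y c) m) = - br c m + sm k c"
    proof -
      have "br x (br (br y c) m) = br (br x (br y c)) m + br (br y c) (br x m)" by (rule jac)
      moreover have "br (br y c) x = - br x (br y c)" by (rule br_anti)
      ultimately show ?thesis using xyc s3 by (simp add: br_anti[of "br y c" x])
    qed
    have s5: "br x (br c (br q (br y l))) = br c (br x (br q (br y l)))"
      using jac[of x c "br q (br y l)"] xc by simp
    have s6: "br x (br q (br y l)) = br d (br y l) - m"
      unfolding m_def using jac[of x q "br y l"] xq xyl by simp
    have s7: "br c m = sm k c + br c (br d (br y l))"
    proof -
      have "br y (br d l) = br (br y d) l + br d (br y l)" by (rule jac)
      then have "br (br y d) l = sm k (br y x) - br d (br y l)" using k by (simp add: algebra_simps)
      then have "m = - sm k (br y x) + br d (br y l)" unfolding m_def q_def by simp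
      then show ?thesis using ch by simp
    qed
    have "br x (br y (br c m)) = br x (br (br y c) m) + br x (br c (br q (br y l)))"
      using s1 s2 by simp
    also have "\<dots> = - br c m + sm k c + br c (br d (br y l) - m)" using s4 s5 s6 by simp
    also have "\<dots> = - br c m" using s7 by (simp add: algebra_simps)
    finally show ?thesis unfolding m_def using Lchar by blast
  qed
  have part2: "Lm \<inter> J1 = line_span sm d"
  proof
    show "Lm \<inter> J1 \<subseteq> line_span sm d"
    proof
      fix l assume l: "l \<in> Lm \<inter> J1"
      obtain k where k: "br c l = sm k x" using Lbr[OF cL] l by blast
      have "br q (br c l) = -l" using l J1char by blast
      moreover have "br q x = - d" using xq by (subst br_anti) simp
      ultimately have "- l = - sm k d" using k by simp
      then have "l = sm k d" by simp
      then show "l \<in> line_span sm d" unfolding in_line by blast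
    qed
    show "line_span sm d \<subseteq> Lm \<inter> J1"
    proof
      fix z assume "z \<in> line_span sm d"
      then obtain t where t: "z = sm t d" unfolding in_line by blast
      have "br q x = - d" using xq by (subst br_anti) simp
      then have "br q (br c z) = - z" using t cd by simp
      then have "z \<in> J1" using J1char by blast
      moreover have "z \<in> Lm" using t Lsm[OF dL] by simp
      ultimately show "z \<in> Lm \<inter> J1" by blast
    qed
  qed
  have J0diff: "j1 - j2 \<in> J0" if j1: "j1 \<in> J0" and j2: "j2 \<in> J0" for j1 j2
  proof -
    obtain m1 n1 where "br c j1 = sm m1 c" "br q j1 = sm n1 q" using j1 unfolding J0_def in_line by blast
    moreover obtain m2 n2 where "br c j2 = sm m2 c" "br q j2 = sm n2 q" using j2 unfolding J0_def in_line by blast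
    ultimately have "br c (j1 - j2) = sm (m1 - m2) c" "br q (j1 - j2) = sm (n1 - n2) q" by simp_all
    then show ?thesis unfolding J0_def in_line by blast
  qed
  have Jdiff: "j1 - j2 \<in> Jm" if "j1 \<in> Jm" "j2 \<in> Jm" for j1 j2
    using that Jchar by simp
  have Jneg: "- j \<in> Jm" if "j \<in> Jm" for j
    using that Jchar by simp
  have decomp: "\<exists>a b c' d'. l = a + b + c' + d' \<and> a \<in> line_span sm c \<and> b \<in> Lm \<inter> Jm \<and> c' \<in> Lm \<inter> J0 \<and> d' \<in> line_span sm d"
    if l: "l \<in> Lm" for l
  proof -
    obtain k where k: "br c l = sm k x" using Lbr[OF cL l] by blast
    define l1 where "l1 = l - sm k d"
    have l1L: "l1 \<in> Lm" unfolding l1_def using Ldiff[OF l Lsm[OF dL]] .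
    have c1: "br c l1 = 0" unfolding l1_def using k cd by simp
    define \<alpha> where "\<alpha> = g l1 q"
    define l2 where "l2 = l1 - sm \<alpha> c"
    have l2L: "l2 \<in> Lm" unfolding l2_def using Ldiff[OF l1L Lsm[OF cL]] .
    have c2: "br c l2 = 0" unfolding l2_def using c1 by simp
    have q2: "g l2 q = 0" unfolding l2_def \<alpha>_def using gcq by simp
    have q2': "g q l2 = 0" using q2 by (simp add: g_sym)
    define j where "j = - br c (br q l2)"
    define j' where "j' = l2 - j"
    have gcql2: "g c (br q l2) = 0"
    proof -
      have "g c (br q l2) = g (br c q) l2" by (rule inv')
      moreover have "br c q = - br q c" by (rule br_anti)
      ultimately have "g c (br q l2) = - g q (br c l2)" by (simp add: inv)
      then show ?thesis using c2 by simp
    qed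
    have jL: "j \<in> Lm" unfolding j_def using Lneg[OF jLm[OF l2L]] .
    have jJ: "j \<in> Jm"
    proof -
      have "br c (br q (br c (br q l2))) = sm (g c (br q (br q l2))) c - sm (g c (br q l2)) (br c q) - sm (g c q) (br c (br q l2))"
        by (rule E3[OF cE'])
      moreover have "br q (br q l2) = 0" using E1[OF qE, of l2] q2' by simp
      ultimately have "br c (br q (br c (br q l2))) = - br c (br q l2)" using gcql2 gcq by simp
      then show ?thesis unfolding j_def using Jchar by simp
    qed
    have j'L: "j' \<in> Lm" unfolding j'_def using Ldiff[OF l2L jL] .
    have j'J: "j' \<in> J0"
    proof -
      have "br c j' = br c l2 + br c (br c (br q l2))" unfolding j'_def j_def by simp
      then have "br c j' = 0" using c2 E1[OF cE', of "br q l2"] gcql2 by simp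
      moreover have "br q j' = 0"
      proof -
        have "br q j' = br q l2 + br q (br c (br q l2))" unfolding j'_def j_def by simp
        moreover have "br q (br c (br q l2)) = sm (g q (br c l2)) q - sm (g q l2) (br q c) - sm (g q c) (br q l2)"
          by (rule E3[OF qE])
        ultimately show ?thesis using c2 q2' gqc by simp
      qed
      ultimately have "br c j' = sm 0 c" "br q j' = sm 0 q" by simp_all
      then show ?thesis unfolding J0_def in_line by blast
    qed
    have "l = sm \<alpha> c + j + j' + sm k d" unfolding j'_def l2_def l1_def by (simp add: algebra_simps)
    moreover have "sm \<alpha> c \<in> line_span sm c" "sm k d \<in> line_span sm d" unfolding in_line by blast+
    ultimately show ?thesis using jL jJ j'L j'J by blast
  qed
  have uniq4: "a = a' \<and> b = b' \<and> c' = c'' \<and> d' = d''"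
    if a: "a \<in> line_span sm c" and b: "b \<in> Lm \<inter> Jm" and c': "c' \<in> Lm \<inter> J0" and d': "d' \<in> line_span sm d"
      and a': "a' \<in> line_span sm c" and b': "b' \<in> Lm \<inter> Jm" and c'': "c'' \<in> Lm \<inter> J0" and d'': "d'' \<in> line_span sm d"
      and eq: "a + b + c' + d' = a' + b' + c'' + d''"
    for a b c' d' a' b' c'' d''
  proof -
    obtain s1 where s1: "a = sm s1 c" using a unfolding in_line by blast
    obtain s2 where s2: "a' = sm s2 c" using a' unfolding in_line by blast
    obtain t1 where t1: "d' = sm t1 d" using d' unfolding in_line by blast
    obtain t2 where t2: "d'' = sm t2 d" using d'' unfolding in_line by blast
    define j where "j = b - b'"
    define j' where "j' = c' - c''"
    have jJ: "j \<in> Jm" unfolding j_def using Jdiff b b' by blast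
    have j'J: "j' \<in> J0" unfolding j'_def using J0diff c' c'' by blast
    have eq0: "sm (s1 - s2) c + j + j' + sm (t1 - t2) d = 0"
      using eq unfolding s1 s2 t1 t2 j_def j'_def by (simp add: algebra_simps)
    obtain m where m: "br c j' = sm m c" using j'J unfolding J0_def in_line by blast
    have "br c (sm (s1 - s2) c + j + j' + sm (t1 - t2) d) = 0" using eq0 by simp
    then have "sm m c + sm (t1 - t2) x = 0" using Jc[OF jJ] m cd by simp
    then have "g (sm m c + sm (t1 - t2) x) y = 0" by simp
    then have "t1 - t2 = 0" using Lgy[OF cL] gxy by simp
    then have tt: "t1 = t2" by simp
    then have eq1: "sm (s1 - s2) c + j + j' = 0" using eq0 by simp
    then have "g (sm (s1 - s2) c + j + j') q = 0" by simp
    moreover have "g j' q = 0" using J0q[OF j'J] by (simp add: g_sym)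
    ultimately have "s1 - s2 = 0" using Jgq[OF jJ] gcq by simp
    then have ss: "s1 = s2" by simp
    then have "j + j' = 0" using eq1 by simp
    then have "j' = - j" by (simp add: eq_neg_iff_add_eq_0 add.commute)
    then have "j' \<in> Jm" using Jneg[OF jJ] by simp
    then have j'0: "j' = 0" using J0Jm j'J by blast
    then have j0: "j = 0" using \<open>j + j' = 0\<close> by simp
    show ?thesis using ss tt j0 j'0 s1 s2 t1 t2 unfolding j_def j'_def by simp
  qed
  have part1: "direct_sum4 Lm (line_span sm c) (Lm \<inter> Jm) (Lm \<inter> J0) (line_span sm d)"
    unfolding direct_sum4_def
  proof (intro conjI)
    show "Lm = {a + b + c' + d' |a b c' d'. a \<in> line_span sm c \<and> b \<in> Lm \<inter> Jm \<and> c' \<in> Lm \<inter> J0 \<and> d' \<in> line_span sm d}"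
    proof
      show "Lm \<subseteq> {a + b + c' + d' |a b c' d'. a \<in> line_span sm c \<and> b \<in> Lm \<inter> Jm \<and> c' \<in> Lm \<inter> J0 \<and> d' \<in> line_span sm d}"
        using decomp by blast
      show "{a + b + c' + d' |a b c' d'. a \<in> line_span sm c \<and> b \<in> Lm \<inter> Jm \<and> c' \<in> Lm \<inter> J0 \<and> d' \<in> line_span sm d} \<subseteq> Lm"
      proof
        fix z assume "z \<in> {a + b + c' + d' |a b c' d'. a \<in> line_span sm c \<and> b \<in> Lm \<inter> Jm \<and> c' \<in> Lm \<inter> J0 \<and> d' \<in> line_span sm d}"
        then obtain a b c' d' where z: "z = a + b + c' + d'" and a: "a \<in> line_span sm c" and b: "b \<in> Lm"
          and c': "c' \<in> Lm" and d': "d' \<in> line_span sm d" by blast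
        have aL: "a \<in> Lm" using a Lsm[OF cL] unfolding in_line by blast
        have dL': "d' \<in> Lm" using d' Lsm[OF dL] unfolding in_line by blast
        show "z \<in> Lm" unfolding z using Ladd aL b c' dL' by blast
      qed
    qed
    show "\<forall>a\<in>line_span sm c. \<forall>b\<in>Lm \<inter> Jm. \<forall>c'\<in>Lm \<inter> J0. \<forall>d'\<in>line_span sm d. \<forall>a'\<in>line_span sm c. \<forall>b'\<in>Lm \<inter> Jm. \<forall>c''\<in>Lm \<inter> J0. \<forall>d''\<in>line_span sm d.
        a + b + c' + d' = a' + b' + c'' + d'' \<longrightarrow> a = a' \<and> b = b' \<and> c' = c'' \<and> d' = d''"
      using uniq4 by blast
  qed
  have G1: "grading sm br g c q (-1) = Jm" unfolding grading_def Jm_def Uc_def by simp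
  have G0: "grading sm br g c q 0 = J0" unfolding grading_def J0_def by simp
  have G2: "grading sm br g c q 1 = J1" unfolding grading_def J1_def Uc_def by simp
  show ?thesis unfolding q_def[symmetric] Lm_eq G1 G0 G2 using part1 part2 by blast
qed


end

theorem proposition4p6:
  fixes sm :: "'k::field \<Rightarrow> 'v::ab_group_add \<Rightarrow> 'v"
    and br :: "'v \<Rightarrow> 'v \<Rightarrow> 'v"
    and g :: "'v \<Rightarrow> 'v \<Rightarrow> 'k"
    and x y c d :: 'v
  assumes simple: "simple_lie_algebra sm br"
    and field_size: "infinite (UNIV :: 'k set) \<or> card (UNIV :: 'k set) \<ge> 4"
    and generated: "lie_gen sm br {a. pure_extremal sm br a} = UNIV"
    and lines: "has_lines sm br"
    and form: "extremal_form sm br g"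
    and xE: "x \<in> extremal_set sm br" and yE: "y \<in> extremal_set sm br"
    and gxy: "g x y = 1"
    and cE: "c \<in> extremal_set sm br \<inter> grading sm br g x y (-1)"
    and dE: "d \<in> extremal_set sm br \<inter> grading sm br g x y (-1)"
    and cd: "br c d = x"
  shows "direct_sum4 (grading sm br g x y (-1))
           (line_span sm c)
           (grading sm br g x y (-1) \<inter> grading sm br g c (- br y d) (-1))
           (grading sm br g x y (-1) \<inter> grading sm br g c (- br y d) 0)
           (line_span sm d)
         \<and> grading sm br g x y (-1) \<inter> grading sm br g c (- br y d) 1 = line_span sm d"
proof -
  interpret xlie sm br g using simple form generated field_size by unfold_locales
  show ?thesis by (rule main[OF xE yE gxy cE dE cd])
qed

end
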